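(* Let $n,t\in\mathbb N$, let $\mathcal H$ be an $n$-vertex hypergraph with more than $tn$ edges, and let $r:=e(\mathcal H)-tn$. If there exist distinct pairwise intersecting edges $e_1,\dots,e_{2r+2}\in\mathcal H$ such that $\{e_{2i-1},e_{2i}\}$ is $t$-useful for every $i\in[r+1]$, then $\chi'_\ell(\mathcal H)<tn$.
   Context: A hypergraph $\mathcal H$ has a finite vertex set $V(\mathcal H)$ and a finite set of edges, each edge $e$ with a nonempty set $V(e)\subseteq V(\mathcal H)$ (multiple edges allowed); $n$-vertex means $|V(\mathcal H)|=n$; $e(\mathcal H)$ is the number of edges. Edges $f_1,\dots,f_k$ are pairwise intersecting if their vertex sets pairwise intersect. $N(e)$ is the set of edges $f\neq e$ with $V(e)\cap V(f)\neq\emptyset$. In an $n$-vertex hypergraph, a pair $\{e,f\}$ of distinct edges is $t$-useful if $V(e)\cap V(f)\neq\emptyset$ and $|N(e)\cap N(f)|\leq tn-3$. The list chromatic index $\chi'_\ell(\mathcal H)$ is the least $s$ such that for every assignment of lists $C(e)$ with $|C(e)|\geq s$ there is a proper edge-colouring $\phi$ (distinct edges of equal colour have disjoint vertex sets) with $\phi(e)\in C(e)$ for all $e$. $[m]=\{1,\dots,m\}$. *)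

theory Defs
  imports Main
begin

text \<open>A hypergraph is given by a vertex set VH, an edge index set E (so that
multiple edges are allowed) and an incidence map V assigning to each edge its
vertex set.\<close>

definition hypergraph :: "'v set \<Rightarrow> 'e set \<Rightarrow> ('e \<Rightarrow> 'v set) \<Rightarrow> bool" where
  "hypergraph VH E V \<longleftrightarrow> finite VH \<and> finite E \<and>
     (\<forall>e\<in>E. V e \<noteq> {} \<and> V e \<subseteq> VH)"

definition nbhd :: "'e set \<Rightarrow> ('e \<Rightarrow> 'v set) \<Rightarrow> 'e \<Rightarrow> 'e set" where
  "nbhd E V e = {f \<in> E. f \<noteq> e \<and> V e \<inter> V f \<noteq> {}}"

definition t_useful :: "'v set \<Rightarrow> 'e set \<Rightarrow> ('e \<Rightarrow> 'v set) \<Rightarrow> nat \<Rightarrow> 'e \<Rightarrow> 'e \<Rightarrow> bool" where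
  "t_useful VH E V t e f \<longleftrightarrow> e \<in> E \<and> f \<in> E \<and> e \<noteq> f \<and> V e \<inter> V f \<noteq> {} \<and>
     int (card (nbhd E V e \<inter> nbhd E V f)) \<le> int t * int (card VH) - 3"

definition proper_edge_colouring :: "'e set \<Rightarrow> ('e \<Rightarrow> 'v set) \<Rightarrow> ('e \<Rightarrow> 'c) \<Rightarrow> bool" where
  "proper_edge_colouring E V \<phi> \<longleftrightarrow>
     (\<forall>e\<in>E. \<forall>f\<in>E. e \<noteq> f \<and> \<phi> e = \<phi> f \<longrightarrow> V e \<inter> V f = {})"

definition list_colourable :: "'e set \<Rightarrow> ('e \<Rightarrow> 'v set) \<Rightarrow> nat \<Rightarrow> bool" where
  "list_colourable E V s \<longleftrightarrow>
     (\<forall>C :: 'e \<Rightarrow> nat set. (\<forall>e\<in>E. finite (C e) \<and> card (C e) \<ge> s) \<longrightarrow>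
        (\<exists>\<phi>. (\<forall>e\<in>E. \<phi> e \<in> C e) \<and> proper_edge_colouring E V \<phi>))"

definition list_chromatic_index :: "'e set \<Rightarrow> ('e \<Rightarrow> 'v set) \<Rightarrow> nat" where
  "list_chromatic_index E V = (LEAST s. list_colourable E V s)"

end

theory Submission
  imports Defs
begin


lemma hall:
  fixes A :: "'i \<Rightarrow> 'a set"
  assumes "finite I" "\<forall>i\<in>I. finite (A i)" "\<forall>S\<subseteq>I. card S \<le> card (\<Union>(A ` S))"
  shows "\<exists>f. inj_on f I \<and> (\<forall>i\<in>I. f i \<in> A i)"
  using assms
proof (induction "card I" arbitrary: I A rule: less_induct)
  case less
  show ?case
  proof (cases "I = {}")
    case True then show ?thesis by auto
  next
    case False
    show ?thesis
    proof (cases "\<exists>S. S \<subseteq> I \<and> S \<noteq> {} \<and> S \<noteq> I \<and> card (\<Union>(A ` S)) \<le> card S")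
      case True
      then obtain S where S: "S \<subseteq> I" "S \<noteq> {}" "S \<noteq> I" "card (\<Union>(A ` S)) \<le> card S" by blast
      have fS: "finite S" using S(1) less.prems(1) finite_subset by blast
      have cS: "card S < card I" using S(1,3) less.prems(1) by (meson psubsetI psubset_card_mono)
      obtain f1 where f1: "inj_on f1 S" "\<forall>i\<in>S. f1 i \<in> A i"
      proof -
        have a1: "\<forall>i\<in>S. finite (A i)" using less.prems(2) S(1) by blast
        have a2: "\<forall>S'\<subseteq>S. card S' \<le> card (\<Union>(A ` S'))" using less.prems(3) S(1) by blast
        show ?thesis using less.hyps[of S A, OF cS fS a1 a2] that by blast
      qed
      define T where "T = I - S"
      define B where "B = (\<lambda>i. A i - \<Union>(A ` S))"
      have fT: "finite T" using less.prems(1) T_def by blast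
      have cT: "card T < card I" using S(1,2) less.prems(1) T_def
      proof -
        have "T \<subset> I" using S(1,2) T_def by blast
        then show ?thesis using less.prems(1) psubset_card_mono by blast
      qed
      have hallT: "\<forall>R\<subseteq>T. card R \<le> card (\<Union>(B ` R))"
      proof (intro allI impI)
        fix R assume R: "R \<subseteq> T"
        have fR: "finite R" using R fT finite_subset by blast
        have eq: "\<Union>(B ` R) = \<Union>(A ` (R \<union> S)) - \<Union>(A ` S)" by (auto simp: B_def)
        have fin: "finite (\<Union>(A ` (R \<union> S)))" using fR fS less.prems(2) R S(1) T_def by auto
        have sub: "\<Union>(A ` S) \<subseteq> \<Union>(A ` (R \<union> S))" by auto
        have c1: "card (\<Union>(B ` R)) = card (\<Union>(A ` (R \<union> S))) - card (\<Union>(A ` S))"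
          unfolding eq using fin sub by (meson card_Diff_subset finite_subset)
        have c2: "card (R \<union> S) \<le> card (\<Union>(A ` (R \<union> S)))" proof -
          have "R \<union> S \<subseteq> I" using R S(1) T_def by blast
          then show ?thesis using less.prems(3) by blast
        qed
        have c3: "card (R \<union> S) = card R + card S" using R T_def fR fS by (subst card_Un_disjoint) auto
        show "card R \<le> card (\<Union>(B ` R))" using c1 c2 c3 S(4) by linarith
      qed
      have finB: "\<forall>i\<in>T. finite (B i)" using less.prems(2) T_def B_def by auto
      obtain f2 where f2: "inj_on f2 T" "\<forall>i\<in>T. f2 i \<in> B i"
        using less.hyps[of T B, OF cT fT finB hallT] by blast
      define f where "f = (\<lambda>i. if i \<in> S then f1 i else f2 i)"
      have "inj_on f I"
      proof (rule inj_onI)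
        fix x y assume xy: "x \<in> I" "y \<in> I" "f x = f y"
        show "x = y"
        proof (cases "x \<in> S"; cases "y \<in> S")
          assume "x \<in> S" "y \<in> S" then show ?thesis using xy f1(1) by (auto simp: f_def inj_on_def)
        next
          assume "x \<notin> S" "y \<notin> S" then show ?thesis using xy f2(1) by (auto simp: f_def inj_on_def T_def)
        next
          assume a: "x \<in> S" "y \<notin> S"
          have "f x \<in> \<Union>(A ` S)" using a f1(2) f_def by auto
          moreover have "f y \<notin> \<Union>(A ` S)" using a xy(2) f2(2) T_def B_def f_def by auto
          ultimately show ?thesis using xy by simp
        next
          assume a: "x \<notin> S" "y \<in> S"
          have "f y \<in> \<Union>(A ` S)" using a f1(2) f_def by auto
          moreover have "f x \<notin> \<Union>(A ` S)" using a xy(1) f2(2) T_def B_def f_def by auto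
          ultimately show ?thesis using xy by simp
        qed
      qed
      moreover have "\<forall>i\<in>I. f i \<in> A i" using f1(2) f2(2) by (auto simp: f_def T_def B_def)
      ultimately show ?thesis by blast
    next
      case False2: False
      obtain i where i: "i \<in> I" using False by blast
      have "card {i} \<le> card (\<Union>(A ` {i}))" using less.prems(3) i by blast
      then have "A i \<noteq> {}" by auto
      then obtain a where a: "a \<in> A i" by blast
      define I' where "I' = I - {i}"
      define A' where "A' = (\<lambda>j. A j - {a})"
      have fI': "finite I'" using less.prems(1) I'_def by blast
      have cI': "card I' < card I" using i less.prems(1) I'_def by (metis card_Diff1_less)
      have finA': "\<forall>j\<in>I'. finite (A' j)" using less.prems(2) I'_def A'_def by auto
      have hall': "\<forall>S\<subseteq>I'. card S \<le> card (\<Union>(A' ` S))"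
      proof (intro allI impI)
        fix S assume S: "S \<subseteq> I'"
        show "card S \<le> card (\<Union>(A' ` S))"
        proof (cases "S = {}")
          case True then show ?thesis by simp
        next
          case False
          have "S \<noteq> I" using S i I'_def by blast
          moreover have "S \<subseteq> I" using S I'_def by blast
          ultimately have "\<not> card (\<Union>(A ` S)) \<le> card S" using False2 False by blast
          then have lt: "card S < card (\<Union>(A ` S))" by linarith
          have eq: "\<Union>(A' ` S) = \<Union>(A ` S) - {a}" by (auto simp: A'_def)
          have fin: "finite (\<Union>(A ` S))" using \<open>S \<subseteq> I\<close> less.prems(1,2) finite_subset by blast
          have "card (\<Union>(A ` S)) \<le> card (\<Union>(A' ` S)) + 1" unfolding eq using fin
            by (cases "a \<in> \<Union>(A ` S)") (auto simp: card_Diff_singleton_if)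
          then show ?thesis using lt by linarith
        qed
      qed
      obtain f' where f': "inj_on f' I'" "\<forall>j\<in>I'. f' j \<in> A' j"
        using less.hyps[of I' A', OF cI' fI' finA' hall'] by blast
      define f where "f = f'(i := a)"
      have "inj_on f I"
      proof (rule inj_onI)
        fix x y assume xy: "x \<in> I" "y \<in> I" "f x = f y"
        show "x = y"
        proof (cases "x = i"; cases "y = i")
          assume "x \<noteq> i" "y \<noteq> i" then show ?thesis using xy f'(1) by (auto simp: f_def inj_on_def I'_def)
        next
          assume "x = i" "y \<noteq> i" then show ?thesis using xy f'(2) by (auto simp: f_def I'_def A'_def)
        next
          assume "x \<noteq> i" "y = i" then show ?thesis using xy f'(2) by (auto simp: f_def I'_def A'_def)
        qed simp
      qed
      moreover have "\<forall>j\<in>I. f j \<in> A j" using f'(2) a by (auto simp: f_def I'_def A'_def)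
      ultimately show ?thesis by blast
    qed
  qed
qed



lemma card_M_le:
  fixes M :: "('e \<times> 'e) set"
  assumes fin: "finite E"
  and pM: "\<forall>p\<in>M. fst p \<in> E \<and> snd p \<in> E \<and> fst p \<noteq> snd p"
  and dM: "\<forall>p\<in>M. \<forall>q\<in>M. p \<noteq> q \<longrightarrow> {fst p, snd p} \<inter> {fst q, snd q} = {}"
  shows "2 * card M \<le> card E" "finite M"
proof -
  have sub: "M \<subseteq> E \<times> E" using pM by (auto simp: mem_Times_iff)
  then show fM: "finite M" using fin finite_subset by blast
  have i1: "inj_on fst M" using dM by (force simp: inj_on_def)
  have i2: "inj_on snd M" using dM by (force simp: inj_on_def)
  have dj: "fst ` M \<inter> snd ` M = {}" using dM pM by fastforce
  have "card (fst ` M \<union> snd ` M) = card (fst ` M) + card (snd ` M)"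
    using dj fM by (simp add: card_Un_disjoint)
  also have "\<dots> = 2 * card M" using i1 i2 by (simp add: card_image)
  finally have "card (fst ` M \<union> snd ` M) = 2 * card M" .
  moreover have "fst ` M \<union> snd ` M \<subseteq> E" using pM by auto
  ultimately show "2 * card M \<le> card E" using fin by (metis card_mono)
qed

lemma main_col:
  fixes M :: "('e \<times> 'e) set" and C :: "'e \<Rightarrow> 'c set"
  assumes "finite E"
  and "\<forall>p\<in>M. fst p \<in> E \<and> snd p \<in> E \<and> fst p \<noteq> snd p \<and> V (fst p) \<inter> V (snd p) = {}"
  and "\<forall>p\<in>M. \<forall>q\<in>M. p \<noteq> q \<longrightarrow> {fst p, snd p} \<inter> {fst q, snd q} = {}"
  and "card E \<le> L + card M"
  and "\<forall>e\<in>E. finite (C e) \<and> card (C e) \<ge> L"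
  shows "\<exists>\<phi>. (\<forall>e\<in>E. \<phi> e \<in> C e) \<and> (\<forall>e\<in>E. \<forall>f\<in>E. e \<noteq> f \<and> \<phi> e = \<phi> f \<longrightarrow> V e \<inter> V f = {})"
  using assms
proof (induction "card E" arbitrary: E M L C rule: less_induct)
  case less
  note fin = less.prems(1) and pM = less.prems(2) and dM = less.prems(3)
    and cE = less.prems(4) and cC = less.prems(5)
  have pM': "\<forall>p\<in>M. fst p \<in> E \<and> snd p \<in> E \<and> fst p \<noteq> snd p" using pM by blast
  have M2: "2 * card M \<le> card E" using card_M_le[OF fin pM' dM] by auto
  have fM: "finite M" using card_M_le[OF fin pM' dM] by auto
  have hML: "card M \<le> L" using M2 cE by linarith
  show ?case
  proof (cases "\<exists>p\<in>M. C (fst p) \<inter> C (snd p) \<noteq> {}")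
    case True
    then obtain p c where p: "p \<in> M" and c: "c \<in> C (fst p)" "c \<in> C (snd p)" by blast
    define x where "x = fst p"
    define y where "y = snd p"
    have xy: "x \<in> E" "y \<in> E" "x \<noteq> y" "V x \<inter> V y = {}" using pM p x_def y_def by auto
    define E' where "E' = E - {x, y}"
    define M' where "M' = M - {p}"
    define C' where "C' = (\<lambda>e. C e - {c})"
    have cE': "card E' = card E - 2" using xy fin E'_def by (simp add: card_Diff_subset)
    have cM': "card M' = card M - 1" using p fM M'_def by simp
    have Mpos: "card M \<ge> 1" using p fM by (metis One_nat_def Suc_leI card_gt_0_iff empty_iff)
    have lt: "card E' < card E" using cE' Mpos M2 by linarith
    have f': "finite E'" using fin E'_def by blast
    have pM2: "\<forall>q\<in>M'. fst q \<in> E' \<and> snd q \<in> E' \<and> fst q \<noteq> snd q \<and> V (fst q) \<inter> V (snd q) = {}"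
    proof
      fix q assume q: "q \<in> M'"
      then have "q \<noteq> p" "q \<in> M" using M'_def by auto
      then have "{fst q, snd q} \<inter> {x, y} = {}" using dM p x_def y_def by blast
      then show "fst q \<in> E' \<and> snd q \<in> E' \<and> fst q \<noteq> snd q \<and> V (fst q) \<inter> V (snd q) = {}"
        using pM \<open>q \<in> M\<close> E'_def by auto
    qed
    have dM2: "\<forall>q\<in>M'. \<forall>q'\<in>M'. q \<noteq> q' \<longrightarrow> {fst q, snd q} \<inter> {fst q', snd q'} = {}"
      using dM M'_def by blast
    have cE2: "card E' \<le> (L - 1) + card M'" using cE' cM' cE Mpos hML by linarith
    have cC2: "\<forall>e\<in>E'. finite (C' e) \<and> card (C' e) \<ge> L - 1"
    proof
      fix e assume "e \<in> E'"
      then have "e \<in> E" using E'_def by blast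
      then have "finite (C e)" "card (C e) \<ge> L" using cC by auto
      then show "finite (C' e) \<and> card (C' e) \<ge> L - 1" unfolding C'_def
        by (cases "c \<in> C e") (auto simp: card_Diff_singleton_if)
    qed
    obtain \<phi> where \<phi>: "\<forall>e\<in>E'. \<phi> e \<in> C' e"
      "\<forall>e\<in>E'. \<forall>f\<in>E'. e \<noteq> f \<and> \<phi> e = \<phi> f \<longrightarrow> V e \<inter> V f = {}"
      using less.hyps[OF lt f' pM2 dM2 cE2 cC2] by blast
    define \<psi> where "\<psi> = \<phi>(x := c, y := c)"
    have "\<forall>e\<in>E. \<psi> e \<in> C e" using \<phi>(1) c x_def y_def E'_def C'_def \<psi>_def by auto
    moreover have "\<forall>e\<in>E. \<forall>f\<in>E. e \<noteq> f \<and> \<psi> e = \<psi> f \<longrightarrow> V e \<inter> V f = {}"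
    proof (intro ballI impI)
      fix e f assume ef: "e \<in> E" "f \<in> E" "e \<noteq> f \<and> \<psi> e = \<psi> f"
      show "V e \<inter> V f = {}"
      proof (cases "e \<in> E'"; cases "f \<in> E'")
        assume "e \<in> E'" "f \<in> E'" then show ?thesis using ef \<phi>(2) E'_def \<psi>_def by auto
      next
        assume a: "e \<in> E'" "f \<notin> E'"
        then have "\<psi> f = c" "\<psi> e \<noteq> c" using ef xy \<phi>(1) E'_def \<psi>_def C'_def by auto
        then show ?thesis using ef by simp
      next
        assume a: "e \<notin> E'" "f \<in> E'"
        then have "\<psi> e = c" "\<psi> f \<noteq> c" using ef xy \<phi>(1) E'_def \<psi>_def C'_def by auto
        then show ?thesis using ef by simp
      next
        assume a: "e \<notin> E'" "f \<notin> E'"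
        then have "{e, f} = {x, y}" using ef E'_def by auto
        then show ?thesis using xy by (metis Int_commute doubleton_eq_iff)
      qed
    qed
    ultimately show ?thesis by blast
  next
    case noA: False
    show ?thesis
    proof (cases "\<exists>u\<in>E. \<forall>p\<in>M. u \<noteq> fst p \<and> u \<noteq> snd p")
      case True
      then obtain u where u: "u \<in> E" "\<forall>p\<in>M. u \<noteq> fst p \<and> u \<noteq> snd p" by blast
      have Epos: "card E \<ge> 1" using u fin by (metis One_nat_def Suc_leI card_gt_0_iff empty_iff)
      have Lpos: "L \<ge> 1" using Epos cE hML by linarith
      then have "C u \<noteq> {}" using cC u by fastforce
      then obtain c where c: "c \<in> C u" by blast
      define E' where "E' = E - {u}"
      define C' where "C' = (\<lambda>e. C e - {c})"
      have cE': "card E' = card E - 1" using u fin E'_def by simp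
      have lt: "card E' < card E" using cE' Epos by linarith
      have f': "finite E'" using fin E'_def by blast
      have pM2: "\<forall>q\<in>M. fst q \<in> E' \<and> snd q \<in> E' \<and> fst q \<noteq> snd q \<and> V (fst q) \<inter> V (snd q) = {}"
        using pM u E'_def by auto
      have cE2: "card E' \<le> (L - 1) + card M" using cE' cE Lpos by linarith
      have cC2: "\<forall>e\<in>E'. finite (C' e) \<and> card (C' e) \<ge> L - 1"
      proof
        fix e assume "e \<in> E'"
        then have "e \<in> E" using E'_def by blast
        then have "finite (C e)" "card (C e) \<ge> L" using cC by auto
        then show "finite (C' e) \<and> card (C' e) \<ge> L - 1" unfolding C'_def
          by (cases "c \<in> C e") (auto simp: card_Diff_singleton_if)
      qed
      obtain \<phi> where \<phi>: "\<forall>e\<in>E'. \<phi> e \<in> C' e"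
        "\<forall>e\<in>E'. \<forall>f\<in>E'. e \<noteq> f \<and> \<phi> e = \<phi> f \<longrightarrow> V e \<inter> V f = {}"
        using less.hyps[OF lt f' pM2 dM cE2 cC2] by blast
      define \<psi> where "\<psi> = \<phi>(u := c)"
      have "\<forall>e\<in>E. \<psi> e \<in> C e" using \<phi>(1) c E'_def C'_def \<psi>_def by auto
      moreover have "\<forall>e\<in>E. \<forall>f\<in>E. e \<noteq> f \<and> \<psi> e = \<psi> f \<longrightarrow> V e \<inter> V f = {}"
      proof (intro ballI impI)
        fix e f assume ef: "e \<in> E" "f \<in> E" "e \<noteq> f \<and> \<psi> e = \<psi> f"
        show "V e \<inter> V f = {}"
        proof (cases "e = u"; cases "f = u")
          assume "e \<noteq> u" "f \<noteq> u" then show ?thesis using ef \<phi>(2) E'_def \<psi>_def by auto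
        next
          assume a: "e = u" "f \<noteq> u"
          then have "\<psi> f \<noteq> c" "\<psi> e = c" using ef \<phi>(1) E'_def \<psi>_def C'_def by auto
          then show ?thesis using ef by simp
        next
          assume a: "e \<noteq> u" "f = u"
          then have "\<psi> e \<noteq> c" "\<psi> f = c" using ef \<phi>(1) E'_def \<psi>_def C'_def by auto
          then show ?thesis using ef by simp
        qed (use ef in simp)
      qed
      ultimately show ?thesis by blast
    next
      case noB: False
      have hallc: "\<forall>S\<subseteq>E. card S \<le> card (\<Union>(C ` S))"
      proof (intro allI impI)
        fix S assume S: "S \<subseteq> E"
        have fS: "finite S" using S fin finite_subset by blast
        have fU: "finite (\<Union>(C ` S))" using fS S cC by blast
        show "card S \<le> card (\<Union>(C ` S))"
        proof (cases "\<exists>p\<in>M. fst p \<in> S \<and> snd p \<in> S")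
          case True
          then obtain p where p: "p \<in> M" "fst p \<in> S" "snd p \<in> S" by blast
          have dj: "C (fst p) \<inter> C (snd p) = {}" using noA p by blast
          have "card (C (fst p) \<union> C (snd p)) = card (C (fst p)) + card (C (snd p))"
            using dj p S cC by (subst card_Un_disjoint) auto
          also have "\<dots> \<ge> 2 * L"
          proof -
            have "fst p \<in> E" "snd p \<in> E" using p S by auto
            then have "card (C (fst p)) \<ge> L" "card (C (snd p)) \<ge> L" using cC by auto
            then show ?thesis by linarith
          qed
          finally have "card (C (fst p) \<union> C (snd p)) \<ge> 2 * L" .
          moreover have "C (fst p) \<union> C (snd p) \<subseteq> \<Union>(C ` S)" using p by auto
          ultimately have "card (\<Union>(C ` S)) \<ge> 2 * L" using fU by (meson card_mono order_trans)
          moreover have "card S \<le> card E" using S fin card_mono by blast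
          ultimately show ?thesis using cE hML by linarith
        next
          case False
          show ?thesis
          proof (cases "S = {}")
            case True then show ?thesis by simp
          next
            case Sne: False
            then obtain e where e: "e \<in> S" by blast
            define h where "h = (\<lambda>e. SOME p. p \<in> M \<and> (e = fst p \<or> e = snd p))"
            have hM: "\<forall>e\<in>S. h e \<in> M \<and> (e = fst (h e) \<or> e = snd (h e))"
            proof
              fix e assume "e \<in> S"
              then have "\<exists>p. p \<in> M \<and> (e = fst p \<or> e = snd p)" using noB S by blast
              then show "h e \<in> M \<and> (e = fst (h e) \<or> e = snd (h e))" unfolding h_def by (rule someI_ex)
            qed
            have "inj_on h S"
            proof (rule inj_onI)
              fix a b assume ab: "a \<in> S" "b \<in> S" "h a = h b"
              show "a = b"
              proof (rule ccontr)
                assume "a \<noteq> b"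
                then have "fst (h a) \<in> S \<and> snd (h a) \<in> S" using hM ab by metis
                then show False using False hM ab by blast
              qed
            qed
            then have "card S \<le> card M" using hM fM by (metis card_inj_on_le image_subsetI)
            also have "\<dots> \<le> card (C e)" using hML cC e S by fastforce
            also have "\<dots> \<le> card (\<Union>(C ` S))" using e fU by (meson UN_upper card_mono)
            finally show ?thesis .
          qed
        qed
      qed
      have "\<forall>e\<in>E. finite (C e)" using cC by blast
      from hall[OF fin this hallc] obtain f where f: "inj_on f E" "\<forall>e\<in>E. f e \<in> C e" by blast
      then show ?thesis by (metis inj_onD)
    qed
  qed
qed



theorem proposition4p3:
  fixes VH :: "'v set" and E :: "'e set" and V :: "'e \<Rightarrow> 'v set"
    and t n r :: nat and es :: "nat \<Rightarrow> 'e"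
  assumes "hypergraph VH E V"
    and "n = card VH"
    and "card E > t * n"
    and "r = card E - t * n"
    and "\<forall>i\<in>{1..2*r+2}. es i \<in> E"
    and "inj_on es {1..2*r+2}"
    and "\<forall>i\<in>{1..2*r+2}. \<forall>j\<in>{1..2*r+2}. V (es i) \<inter> V (es j) \<noteq> {}"
    and "\<forall>i\<in>{1..r+1}. t_useful VH E V t (es (2*i-1)) (es (2*i))"
  shows "list_chromatic_index E V < t * n"
proof -
  note hg = assms(1) and nd = assms(2) and cE = assms(3) and rd = assms(4) and esE = assms(5)
    and esi = assms(6) and cl = assms(7) and us = assms(8)
  have finE: "finite E" and Vne: "\<forall>e\<in>E. V e \<noteq> {}" using hg unfolding hypergraph_def by auto
  define k where "k = r + 1"
  define W where "W = (\<lambda>i. {g \<in> E. g \<noteq> es (2*i-1) \<and> g \<noteq> es (2*i) \<and>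
      (V (es (2*i-1)) \<inter> V g = {} \<or> V (es (2*i)) \<inter> V g = {})})"
  have u1: "t_useful VH E V t (es 1) (es 2)" using us by force
  have tn3: "int (t * n) \<ge> 3" using u1 nd unfolding t_useful_def by simp
  have cW: "card (W i) \<ge> k" if i: "i \<in> {1..k}" for i
  proof -
    define a where "a = es (2*i-1)"
    define b where "b = es (2*i)"
    have u: "t_useful VH E V t a b" using us i a_def b_def k_def by blast
    then have ab: "a \<in> E" "b \<in> E" "a \<noteq> b"
      and cn: "int (card (nbhd E V a \<inter> nbhd E V b)) \<le> int t * int (card VH) - 3"
      unfolding t_useful_def by auto
    have sub: "E - {a, b} \<subseteq> W i \<union> (nbhd E V a \<inter> nbhd E V b)"
      unfolding W_def nbhd_def a_def[symmetric] b_def[symmetric] by (auto simp: Int_commute)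
    have fW: "finite (W i)" using finE W_def by auto
    have fN: "finite (nbhd E V a \<inter> nbhd E V b)" using finE unfolding nbhd_def by auto
    have "card (E - {a, b}) \<le> card (W i \<union> (nbhd E V a \<inter> nbhd E V b))"
      using sub fW fN by (simp add: card_mono)
    also have "\<dots> \<le> card (W i) + card (nbhd E V a \<inter> nbhd E V b)" by (rule card_Un_le)
    finally have c1: "card (E - {a, b}) \<le> card (W i) + card (nbhd E V a \<inter> nbhd E V b)" .
    have c2: "card (E - {a, b}) = card E - 2" using ab finE by (simp add: card_Diff_subset)
    have "card {a, b} \<le> card E" using ab finE by (intro card_mono) auto
    then have "card E \<ge> 2" using ab(3) by simp
    then have e2: "card E \<ge> 2" .
    have cn2: "int (card (nbhd E V a \<inter> nbhd E V b)) \<le> int (t * n) - 3" using cn nd by simp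
    show ?thesis using c1 c2 cn2 e2 rd k_def cE by linarith
  qed
  have hallW: "\<forall>S\<subseteq>{1..k}. card S \<le> card (\<Union>(W ` S))"
  proof (intro allI impI)
    fix S assume S: "S \<subseteq> {1..k}"
    show "card S \<le> card (\<Union>(W ` S))"
    proof (cases "S = {}")
      case True then show ?thesis by simp
    next
      case False
      then obtain i where i: "i \<in> S" by blast
      have "card S \<le> card {1..k}" using S by (intro card_mono) auto
      then have "card S \<le> k" by simp
      also have "\<dots> \<le> card (W i)" using cW i S by blast
      also have "\<dots> \<le> card (\<Union>(W ` S))"
      proof (rule card_mono)
        have "\<Union>(W ` S) \<subseteq> E" using W_def by auto
        then show "finite (\<Union>(W ` S))" using finE finite_subset by blast
      qed (use i in auto)
      finally show ?thesis .
    qed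
  qed
  have "\<forall>i\<in>{1..k}. finite (W i)" using finE W_def by auto
  from hall[OF _ this hallW] obtain g where g: "inj_on g {1..k}" "\<forall>i\<in>{1..k}. g i \<in> W i" by auto
  define idx where "idx = (\<lambda>i. if V (es (2*i-1)) \<inter> V (g i) = {} then 2*i-1 else 2*(i::nat))"
  define x where "x = (\<lambda>i. es (idx i))"
  have idxr: "idx i \<in> {1..2*r+2}" if "i \<in> {1..k}" for i
  proof -
    have "1 \<le> i" "i \<le> r + 1" using that k_def by auto
    then show ?thesis unfolding idx_def by auto
  qed
  have idxd: "(idx i + 1) div 2 = i" if "i \<in> {1..k}" for i
  proof -
    have "1 \<le> i" using that by auto
    then show ?thesis unfolding idx_def by auto
  qed
  have gW: "g i \<in> W i" if "i \<in> {1..k}" for i using g(2) that by blast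
  have xg: "V (x i) \<inter> V (g i) = {}" if "i \<in> {1..k}" for i
  proof (cases "V (es (2*i-1)) \<inter> V (g i) = {}")
    case True then show ?thesis unfolding x_def idx_def by simp
  next
    case False
    then have "V (es (2*i)) \<inter> V (g i) = {}" using gW[OF that] unfolding W_def by blast
    then show ?thesis using False unfolding x_def idx_def by simp
  qed
  have xE: "x i \<in> E" if "i \<in> {1..k}" for i
  proof -
    have "idx i \<in> {1..2*r+2}" using idxr[OF that] .
    then show ?thesis unfolding x_def using esE by blast
  qed
  have gE: "g i \<in> E" if "i \<in> {1..k}" for i using gW[OF that] unfolding W_def by blast
  define M where "M = (\<lambda>i. (x i, g i)) ` {1..k}"
  have cM: "card M = k"
  proof -
    have "inj_on (\<lambda>i. (x i, g i)) {1..k}"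
    proof (rule inj_onI)
      fix a b assume ab: "a \<in> {1..k}" "b \<in> {1..k}" "(x a, g a) = (x b, g b)"
      then have "g a = g b" by simp
      then show "a = b" using inj_onD[OF g(1)] ab(1,2) by blast
    qed
    then show ?thesis unfolding M_def by (simp add: card_image)
  qed
  have pM: "\<forall>p\<in>M. fst p \<in> E \<and> snd p \<in> E \<and> fst p \<noteq> snd p \<and> V (fst p) \<inter> V (snd p) = {}"
  proof
    fix p assume "p \<in> M"
    then obtain i where i: "i \<in> {1..k}" "p = (x i, g i)" using M_def by blast
    have "x i \<noteq> g i" using xg[OF i(1)] Vne xE[OF i(1)] by auto
    then show "fst p \<in> E \<and> snd p \<in> E \<and> fst p \<noteq> snd p \<and> V (fst p) \<inter> V (snd p) = {}"
      using i xE gE xg by auto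
  qed
  have dM: "\<forall>p\<in>M. \<forall>q\<in>M. p \<noteq> q \<longrightarrow> {fst p, snd p} \<inter> {fst q, snd q} = {}"
  proof (intro ballI impI)
    fix p q assume pq: "p \<in> M" "q \<in> M" "p \<noteq> q"
    then obtain i j where i: "i \<in> {1..k}" "p = (x i, g i)" and j: "j \<in> {1..k}" "q = (x j, g j)"
      using M_def by blast
    have ij: "i \<noteq> j" using pq i j by auto
    have 1: "x i \<noteq> x j"
    proof
      assume "x i = x j"
      then have "idx i = idx j" using esi idxr i j x_def by (meson inj_onD)
      then show False using idxd i j ij by metis
    qed
    have 2: "g i \<noteq> g j" using g(1) i j ij by (meson inj_onD)
    have cij: "V (x i) \<inter> V (x j) \<noteq> {}" using cl idxr i j x_def by blast
    have 3: "x i \<noteq> g j" using xg[OF j(1)] cij by (metis Int_commute)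
    have 4: "g i \<noteq> x j" using xg[OF i(1)] cij by metis
    show "{fst p, snd p} \<inter> {fst q, snd q} = {}" using 1 2 3 4 i j by auto
  qed
  have cEM: "card E \<le> (t * n - 1) + card M" using cM k_def rd cE tn3 by linarith
  have col: "list_colourable E V (t * n - 1)"
    unfolding list_colourable_def proper_edge_colouring_def
  proof (intro allI impI)
    fix C :: "'e \<Rightarrow> nat set" assume C: "\<forall>e\<in>E. finite (C e) \<and> t * n - 1 \<le> card (C e)"
    show "\<exists>\<phi>. (\<forall>e\<in>E. \<phi> e \<in> C e) \<and> (\<forall>e\<in>E. \<forall>f\<in>E. e \<noteq> f \<and> \<phi> e = \<phi> f \<longrightarrow> V e \<inter> V f = {})"
      using main_col[OF finE pM dM cEM C] .
  qed
  have "list_chromatic_index E V \<le> t * n - 1"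
    unfolding list_chromatic_index_def using col by (rule Least_le[where P="list_colourable E V"])
  then show ?thesis using tn3 by linarith
qed

end
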